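(* Let $\beta\in\mathbb{F}G$ and let $\mathcal{C}_{1,\beta}$ be the corresponding $2$-quasi-abelian code over $\mathbb{F}$, with parameters $[2n,k,d_{\min}]$ (length $2n$, dimension $k$, minimum Hamming distance $d_{\min}$). Then there exists $d\in\mathcal{S}G$ with $\pi(d)=\beta$ such that $\pi(\mathfrak{C}_{1,d})=\mathcal{C}_{1,\beta}$ and $\mathfrak{C}_{1,d}$ is a $2$-quasi-abelian code over $\mathcal{S}$ with parameters $[2n,k,d_{\min}]$, i.e. of length $2n$, free over $\mathcal{S}$ of rank $k$, and of minimum Hamming distance $d_{\min}$.
   Context: Let $\mathcal{S}$ be a finite commutative chain ring with maximal ideal $\mathbf{m}$ and residue field $\mathbb{F}=\mathcal{S}/\mathbf{m}=\mathbb{F}_{q^2}$. Let $G$ be a finite abelian group of odd order $n$ with $\gcd(n,q)=1$. The map $\pi:\mathcal{S}G\to\mathbb{F}G$ reduces each coefficient modulo $\mathbf{m}$, applied componentwise on $(\mathcal{S}G)^2$. For $c,d\in\mathcal{S}G$, $\mathfrak{C}_{c,d}=\{(uc,ud):u\in\mathcal{S}G\}$, and for $a,b\in\mathbb{F}G$, $\mathcal{C}_{a,b}=\{(sa,sb):s\in\mathbb{F}G\}$. Elements of $(\mathcal{S}G)^2$ are viewed as words of length $2n$ over $\mathcal{S}$ via their coefficients; the Hamming weight counts nonzero coefficients. *)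

theory Defs
  imports "HOL-Computational_Algebra.Primes"
begin

definition r_ideal :: "'a::comm_ring_1 set \<Rightarrow> bool" where
  "r_ideal I \<longleftrightarrow> 0 \<in> I \<and> (\<forall>x\<in>I. \<forall>y\<in>I. x + y \<in> I) \<and> (\<forall>r. \<forall>x\<in>I. r * x \<in> I)"

definition maximal_ideal :: "'a::comm_ring_1 set \<Rightarrow> bool" where
  "maximal_ideal M \<longleftrightarrow> r_ideal M \<and> M \<noteq> UNIV \<and>
     (\<forall>J. r_ideal J \<and> M \<subseteq> J \<longrightarrow> J = M \<or> J = UNIV)"

definition chain_ring :: "'a::comm_ring_1 itself \<Rightarrow> bool" where
  "chain_ring _ \<longleftrightarrow> finite (UNIV :: 'a set) \<and> (0::'a) \<noteq> 1 \<and>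
     (\<forall>I J :: 'a set. r_ideal I \<and> r_ideal J \<longrightarrow> I \<subseteq> J \<or> J \<subseteq> I)"

definition ring_hom_on :: "('a::comm_ring_1 \<Rightarrow> 'b::comm_ring_1) \<Rightarrow> bool" where
  "ring_hom_on f \<longleftrightarrow> f 1 = 1 \<and> (\<forall>x y. f (x + y) = f x + f y) \<and> (\<forall>x y. f (x * y) = f x * f y)"

definition prime_pow :: "nat \<Rightarrow> bool" where
  "prime_pow q \<longleftrightarrow> (\<exists>p e. prime p \<and> e \<ge> 1 \<and> q = p ^ e)"

text \<open>Elements of RG are functions G -> R (coefficient vectors).\<close>
definition gmult :: "('g::{finite,ab_group_add} \<Rightarrow> 'r::comm_ring_1) \<Rightarrow> ('g \<Rightarrow> 'r) \<Rightarrow> ('g \<Rightarrow> 'r)" where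
  "gmult u v = (\<lambda>g. \<Sum>h\<in>UNIV. u h * v (g - h))"

definition gone :: "'g::{finite,ab_group_add} \<Rightarrow> 'r::comm_ring_1" where
  "gone = (\<lambda>g. if g = 0 then 1 else 0)"

definition qa_code :: "('g::{finite,ab_group_add} \<Rightarrow> 'r::comm_ring_1) \<Rightarrow> ('g \<Rightarrow> 'r)
    \<Rightarrow> (('g \<Rightarrow> 'r) \<times> ('g \<Rightarrow> 'r)) set" where
  "qa_code a b = {(gmult u a, gmult u b) | u. True}"

definition red_word :: "('r \<Rightarrow> 'f) \<Rightarrow> ('g \<Rightarrow> 'r) \<times> ('g \<Rightarrow> 'r) \<Rightarrow> ('g \<Rightarrow> 'f) \<times> ('g \<Rightarrow> 'f)" where
  "red_word f w = (f \<circ> fst w, f \<circ> snd w)"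

definition hweight :: "('g::finite \<Rightarrow> 'r::zero) \<times> ('g \<Rightarrow> 'r) \<Rightarrow> nat" where
  "hweight w = card {g. fst w g \<noteq> 0} + card {g. snd w g \<noteq> 0}"

definition zero_word :: "('g \<Rightarrow> 'r::zero) \<times> ('g \<Rightarrow> 'r)" where
  "zero_word = (\<lambda>_. 0, \<lambda>_. 0)"

text \<open>Minimum Hamming distance of a linear code = minimum weight of a nonzero codeword.\<close>
definition min_dist :: "(('g::finite \<Rightarrow> 'r::zero) \<times> ('g \<Rightarrow> 'r)) set \<Rightarrow> nat" where
  "min_dist C = Min {hweight w | w. w \<in> C \<and> w \<noteq> zero_word}"

definition lin_comb :: "nat \<Rightarrow> (nat \<Rightarrow> 'r::comm_ring_1) \<Rightarrow> (nat \<Rightarrow> ('g \<Rightarrow> 'r) \<times> ('g \<Rightarrow> 'r))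
    \<Rightarrow> ('g \<Rightarrow> 'r) \<times> ('g \<Rightarrow> 'r)" where
  "lin_comb k c b = ((\<lambda>g. \<Sum>i<k. c i * fst (b i) g), (\<lambda>g. \<Sum>i<k. c i * snd (b i) g))"

definition free_rank :: "(('g \<Rightarrow> 'r::comm_ring_1) \<times> ('g \<Rightarrow> 'r)) set \<Rightarrow> nat \<Rightarrow> bool" where
  "free_rank C k \<longleftrightarrow> (\<exists>b. (\<forall>i<k. b i \<in> C) \<and> (\<forall>c. lin_comb k c b \<in> C) \<and>
      (\<forall>w\<in>C. \<exists>!c. (\<forall>i\<ge>k. c i = 0) \<and> w = lin_comb k c b))"

end

theory Submission imports Defs "HOL-Library.FuncSet" begin

lemma gmult_gone_right: "gmult u (gone :: 'g::{finite,ab_group_add} \<Rightarrow> 'r::comm_ring_1) = u"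
proof
  fix g :: 'g
  have "gmult u (gone :: 'g \<Rightarrow> 'r) g = (\<Sum>h\<in>UNIV. if h = g then u h else 0)"
    unfolding gmult_def gone_def by (rule sum.cong) auto
  also have "\<dots> = u g" by simp
  finally show "gmult u (gone :: 'g \<Rightarrow> 'r) g = u g" .
qed

lemma gmult_lin:
  "gmult (\<lambda>h. \<Sum>i\<in>I. c i * f i h) x g = (\<Sum>i\<in>I. c i * gmult (f i) x g)"
  unfolding gmult_def
  by (simp add: sum_distrib_left sum_distrib_right mult.assoc sum.swap[of _ UNIV])

lemma gmult_smul: "gmult (\<lambda>h. s * u h) x g = s * gmult u x g"
  unfolding gmult_def by (simp add: sum_distrib_left mult.assoc)

lemma qa_code_alt: "qa_code gone x = {(u, gmult u x) | u. True}"
  unfolding qa_code_def gmult_gone_right ..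

lemma card_free:
  fixes C :: "(('g \<Rightarrow> 'r::comm_ring_1) \<times> ('g \<Rightarrow> 'r)) set"
  assumes fin: "finite (UNIV :: 'r set)" and fr: "free_rank C k"
  shows "card C = card (UNIV :: 'r set) ^ k"
proof -
  obtain b where b1: "\<forall>c. lin_comb k c b \<in> C"
    and b2: "\<forall>w\<in>C. \<exists>!c. (\<forall>i\<ge>k. c i = 0) \<and> w = lin_comb k c b"
    using fr unfolding free_rank_def by blast
  define Cf where "Cf = {c :: nat \<Rightarrow> 'r. \<forall>i\<ge>k. c i = 0}"
  have inj: "inj_on (\<lambda>c. lin_comb k c b) Cf"
  proof (rule inj_onI)
    fix c1 c2 assume h1: "c1 \<in> Cf" and h2: "c2 \<in> Cf" and h3: "lin_comb k c1 b = lin_comb k c2 b"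
    have "lin_comb k c1 b \<in> C" using b1 by blast
    then have u: "\<exists>!c. (\<forall>i\<ge>k. c i = 0) \<and> lin_comb k c1 b = lin_comb k c b" using b2 by blast
    have p1: "(\<forall>i\<ge>k. c1 i = 0) \<and> lin_comb k c1 b = lin_comb k c1 b" using h1 unfolding Cf_def by simp
    have p2: "(\<forall>i\<ge>k. c2 i = 0) \<and> lin_comb k c1 b = lin_comb k c2 b" using h2 h3 unfolding Cf_def by simp
    show "c1 = c2" using u p1 p2 by blast
  qed
  have img: "(\<lambda>c. lin_comb k c b) ` Cf = C"
  proof
    show "(\<lambda>c. lin_comb k c b) ` Cf \<subseteq> C" using b1 by blast
    show "C \<subseteq> (\<lambda>c. lin_comb k c b) ` Cf"
    proof
      fix w assume "w \<in> C"
      then obtain c where "(\<forall>i\<ge>k. c i = 0) \<and> w = lin_comb k c b" using b2 by blast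
      then show "w \<in> (\<lambda>c. lin_comb k c b) ` Cf" unfolding Cf_def by blast
    qed
  qed
  have c1: "card C = card Cf" using inj img card_image by fastforce
  have bij2: "bij_betw (\<lambda>c. restrict c {..<k}) Cf (PiE {..<k} (\<lambda>_. (UNIV :: 'r set)))"
  proof (rule bij_betw_byWitness[where f' = "\<lambda>f i. if i < k then f i else 0"])
    show "\<forall>a\<in>Cf. (\<lambda>f i. if i < k then f i else 0) (restrict a {..<k}) = a"
      unfolding Cf_def by (auto simp: fun_eq_iff)
    show "\<forall>a'\<in>PiE {..<k} (\<lambda>_. (UNIV :: 'r set)). restrict ((\<lambda>f i. if i < k then f i else 0) a') {..<k} = a'"
      by (auto simp: fun_eq_iff PiE_def extensional_def)
    show "(\<lambda>c. restrict c {..<k}) ` Cf \<subseteq> PiE {..<k} (\<lambda>_. UNIV)"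
      by (intro image_subsetI) (simp only: restrict_PiE_iff UNIV_I, blast)
    show "(\<lambda>f i. if i < k then f i else 0) ` PiE {..<k} (\<lambda>_. UNIV) \<subseteq> Cf"
      unfolding Cf_def by (intro image_subsetI) simp
  qed
  have c2: "card Cf = card (PiE {..<k} (\<lambda>_. (UNIV :: 'r set)))" using bij2 by (rule bij_betw_same_card)
  have c3: "card (PiE {..<k} (\<lambda>_. (UNIV :: 'r set))) = card (UNIV :: 'r set) ^ k" by (simp add: card_PiE)
  show ?thesis using c1 c2 c3 by simp
qed

lemma card_funs:
  assumes "finite (UNIV :: 'r set)"
  shows "card (UNIV :: ('g::finite \<Rightarrow> 'r) set) = card (UNIV :: 'r set) ^ card (UNIV :: 'g set)"
proof -
  have e: "(UNIV :: ('g \<Rightarrow> 'r) set) = PiE UNIV (\<lambda>_. UNIV)" by (auto simp: PiE_UNIV_domain)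
  have "card (PiE (UNIV :: 'g set) (\<lambda>_. (UNIV :: 'r set))) = card (UNIV :: 'r set) ^ card (UNIV :: 'g set)"
    by (subst card_PiE) simp_all
  then show ?thesis using e by metis
qed

lemma card_qa:
  fixes x :: "'g::{finite,ab_group_add} \<Rightarrow> 'r::comm_ring_1"
  assumes "finite (UNIV :: 'r set)"
  shows "card (qa_code gone x) = card (UNIV :: 'r set) ^ card (UNIV :: 'g set)"
proof -
  have "bij_betw (\<lambda>u. (u, gmult u x)) UNIV (qa_code gone x)"
    unfolding qa_code_alt bij_betw_def inj_on_def by auto
  then have "card (UNIV :: ('g \<Rightarrow> 'r) set) = card (qa_code gone x)" by (rule bij_betw_same_card)
  then show ?thesis using card_funs[OF assms, where 'g='g] by simp
qed

lemma free_qa: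
  fixes x :: "'g::{finite,ab_group_add} \<Rightarrow> 'r::comm_ring_1"
  shows "free_rank (qa_code gone x) (card (UNIV :: 'g set))"
proof -
  define n where "n = card (UNIV :: 'g set)"
  obtain e where e: "bij_betw e {..<n} (UNIV :: 'g set)"
    using ex_bij_betw_nat_finite[of "UNIV :: 'g set"] unfolding n_def
    by (auto simp: lessThan_atLeast0)
  define \<delta> where "\<delta> = (\<lambda>h (g::'g). if g = h then (1::'r) else 0)"
  define b where "b = (\<lambda>i. (\<delta> (e i), gmult (\<delta> (e i)) x))"
  define uc where "uc = (\<lambda>c g. \<Sum>i<n. c i * \<delta> (e i) g)"
  have lc: "lin_comb n c b = (uc c, gmult (uc c) x)" for c
    unfolding lin_comb_def b_def uc_def by (auto simp: gmult_lin fun_eq_iff)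
  have inj: "i < n \<Longrightarrow> j < n \<Longrightarrow> e i = e j \<longleftrightarrow> i = j" for i j
    using e unfolding bij_betw_def inj_on_def by auto
  have ucat: "uc c (e j) = c j" if "j < n" for c j
  proof -
    have "uc c (e j) = (\<Sum>i<n. if i = j then c i else 0)"
      unfolding uc_def \<delta>_def by (rule sum.cong) (auto simp: inj that)
    then show ?thesis using that by simp
  qed
  have ucu: "uc (\<lambda>i. if i < n then u (e i) else 0) = u" for u
  proof
    fix g
    obtain j where j: "j < n" "g = e j" using e unfolding bij_betw_def by auto
    show "uc (\<lambda>i. if i < n then u (e i) else 0) g = u g"
      using ucat[OF j(1)] j by simp
  qed
  show ?thesis
    unfolding free_rank_def n_def[symmetric]
  proof (intro exI conjI allI ballI impI)
    show "b i \<in> qa_code gone x" for i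
      unfolding b_def qa_code_alt by auto
    show "lin_comb n c b \<in> qa_code gone x" for c
      unfolding lc qa_code_alt by auto
    fix w assume "w \<in> qa_code gone x"
    then obtain u where w: "w = (u, gmult u x)" unfolding qa_code_alt by auto
    show "\<exists>!c. (\<forall>i\<ge>n. c i = 0) \<and> w = lin_comb n c b"
    proof (rule ex1I[where a = "\<lambda>i. if i < n then u (e i) else 0"])
      show "(\<forall>i\<ge>n. (if i < n then u (e i) else 0) = 0) \<and> w = lin_comb n (\<lambda>i. if i < n then u (e i) else 0) b"
        unfolding lc ucu w by simp
      fix c assume c: "(\<forall>i\<ge>n. c i = 0) \<and> w = lin_comb n c b"
      show "c = (\<lambda>i. if i < n then u (e i) else 0)"
      proof
        fix i show "c i = (if i < n then u (e i) else 0)"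
        proof (cases "i < n")
          case True
          from c have "u = uc c" unfolding lc w by simp
          then show ?thesis using ucat[OF True, of c] True by simp
        next
          case False then show ?thesis using c by simp
        qed
      qed
    qed
  qed
qed


lemma principal_ideal: "r_ideal {x * t | t. True}"
  unfolding r_ideal_def
proof (intro conjI ballI allI)
  show "0 \<in> {x * t | t. True}" by (metis (mono_tags) mem_Collect_eq mult_zero_right)
  fix a b assume "a \<in> {x * t | t. True}" "b \<in> {x * t | t. True}"
  then obtain s t where "a = x * s" "b = x * t" by blast
  then have "a + b = x * (s + t)" by (simp add: distrib_left)
  then show "a + b \<in> {x * t | t. True}" by blast
next
  fix r a assume "a \<in> {x * t | t. True}"
  then obtain s where "a = x * s" by blast
  then have "r * a = x * (r * s)" by (simp add: mult.left_commute)
  then show "r * a \<in> {x * t | t. True}" by blast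
qed

lemma M_props:
  assumes "maximal_ideal M"
  shows "0 \<in> M" "x \<in> M \<Longrightarrow> y * x \<in> M" "x \<in> M \<Longrightarrow> x * y \<in> M" "x \<in> M \<Longrightarrow> y \<in> M \<Longrightarrow> x + y \<in> M"
    "(1::'a::comm_ring_1) \<notin> M"
proof -
  have I: "r_ideal M" "M \<noteq> UNIV" using assms unfolding maximal_ideal_def by auto
  then show "0 \<in> M" "x \<in> M \<Longrightarrow> y * x \<in> M" "x \<in> M \<Longrightarrow> x * y \<in> M" "x \<in> M \<Longrightarrow> y \<in> M \<Longrightarrow> x + y \<in> M"
    unfolding r_ideal_def by (metis mult.commute)+
  show "(1::'a) \<notin> M"
  proof
    assume "1 \<in> M"
    then have "r * 1 \<in> M" for r using I unfolding r_ideal_def by blast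
    then show False using I by auto
  qed
qed

lemma ideal_le_M:
  assumes "chain_ring TYPE('s::comm_ring_1)" "maximal_ideal (M :: 's set)" "r_ideal I" "I \<noteq> UNIV"
  shows "I \<subseteq> M"
proof -
  have "I \<subseteq> M \<or> M \<subseteq> I" using assms(1,3) assms(2) unfolding chain_ring_def maximal_ideal_def by blast
  then show ?thesis using assms(2,3,4) unfolding maximal_ideal_def by blast
qed

lemma unit_notin:
  assumes "chain_ring TYPE('s::comm_ring_1)" "maximal_ideal (M :: 's set)" "x \<notin> M"
  shows "\<exists>y. x * y = 1"
proof (rule ccontr)
  assume "\<not> ?thesis"
  then have "1 \<notin> {x * t | t. True}" by auto
  then have "{x * t | t. True} \<noteq> UNIV" by blast
  then have "{x * t | t. True} \<subseteq> M" using ideal_le_M[OF assms(1,2) principal_ideal] by blast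
  then have "x * 1 \<in> M" by blast
  then show False using assms(3) by simp
qed

lemma nilpotent:
  assumes "chain_ring TYPE('s::comm_ring_1)" "maximal_ideal (M :: 's set)" "x \<in> M"
  shows "\<exists>N. x ^ N = 0"
proof -
  have fin: "finite (UNIV :: 's set)" using assms(1) unfolding chain_ring_def by simp
  have "\<not> inj (\<lambda>i::nat. x ^ i)"
  proof
    assume inj: "inj (\<lambda>i::nat. x ^ i)"
    have fr: "finite (range (\<lambda>i::nat. x ^ i))" by (rule finite_subset[OF subset_UNIV fin])
    have "finite (UNIV :: nat set)" by (rule finite_imageD[OF fr inj])
    then show False by simp
  qed
  then obtain i j where ij: "i \<noteq> j" "x ^ i = x ^ j" unfolding inj_def by blast
  obtain a b where ab: "a < b" "x ^ a = x ^ b"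
  proof (cases "i < j")
    case True then show ?thesis using ij that by blast
  next
    case False then have "j < i" using ij(1) by linarith
    then show ?thesis using ij(2) that by simp
  qed
  define p where "p = x ^ (b - a)"
  have pM: "p \<in> M" unfolding p_def
    using ab(1) M_props(2)[OF assms(2) assms(3), of "x ^ (b - a - 1)"]
    by (metis Suc_diff_Suc diff_Suc_1 power_Suc2 zero_less_diff)
  have "1 - p \<notin> M"
  proof
    assume "1 - p \<in> M"
    then have "(1 - p) + p \<in> M" using M_props(4)[OF assms(2)] pM by blast
    then show False using M_props(5)[OF assms(2)] by simp
  qed
  then obtain y where y: "(1 - p) * y = 1" using unit_notin[OF assms(1,2)] by blast
  have "x ^ b = x ^ a * p" unfolding p_def using ab(1) by (simp add: power_add[symmetric])
  then have "x ^ a * (1 - p) = 0" using ab(2) by (simp add: algebra_simps)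
  then have "x ^ a * (1 - p) * y = 0" by simp
  then have "x ^ a = 0" using y by (simp add: mult.assoc)
  then show ?thesis by blast
qed

definition smul :: "'r::comm_ring_1 \<Rightarrow> ('g \<Rightarrow> 'r) \<times> ('g \<Rightarrow> 'r) \<Rightarrow> ('g \<Rightarrow> 'r) \<times> ('g \<Rightarrow> 'r)" where
  "smul s w = (\<lambda>g. s * fst w g, \<lambda>g. s * snd w g)"

lemma smul_zero_iff: "smul s w = zero_word \<longleftrightarrow> (\<forall>g. s * fst w g = 0 \<and> s * snd w g = 0)"
  unfolding smul_def zero_word_def by (auto simp: fun_eq_iff)

lemma socle:
  assumes "chain_ring TYPE('s::comm_ring_1)" "maximal_ideal (M :: 's set)"
    and w: "(w :: ('g \<Rightarrow> 's) \<times> ('g \<Rightarrow> 's)) \<noteq> zero_word"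
  shows "\<exists>s. smul s w \<noteq> zero_word \<and> (\<forall>m\<in>M. smul (m * s) w = zero_word)"
proof -
  have fin: "finite (UNIV :: 's set)" using assms(1) unfolding chain_ring_def by simp
  define A where "A = (\<lambda>s. {t. smul (t * s) w = zero_word})"
  have main: "\<forall>s. card (UNIV :: 's set) - card (A s) = N \<longrightarrow> smul s w \<noteq> zero_word \<longrightarrow>
      (\<exists>s. smul s w \<noteq> zero_word \<and> (\<forall>m\<in>M. smul (m * s) w = zero_word))" for N
  proof (induction N rule: less_induct)
    case (less N)
    show ?case
    proof (intro allI impI)
      fix s assume N: "card (UNIV :: 's set) - card (A s) = N" and s: "smul s w \<noteq> zero_word"
      show "\<exists>s. smul s w \<noteq> zero_word \<and> (\<forall>m\<in>M. smul (m * s) w = zero_word)"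
      proof (cases "\<forall>m\<in>M. smul (m * s) w = zero_word")
        case True then show ?thesis using s by blast
      next
        case False
        then obtain m where m: "m \<in> M" "smul (m * s) w \<noteq> zero_word" by blast
        obtain K where K: "m ^ K = 0" using nilpotent[OF assms(1,2) m(1)] by blast
        define P where "P = (\<lambda>j. smul (m ^ j * s) w = zero_word)"
        have PK: "P K" unfolding P_def K smul_zero_iff by simp
        define j where "j = (LEAST j. P j)"
        have Pj: "P j" unfolding j_def using PK by (rule LeastI)
        have j0: "j \<noteq> 0"
        proof
          assume "j = 0" then show False using Pj s unfolding P_def by simp
        qed
        have j1: "j \<noteq> 1" using Pj m unfolding P_def by auto
        have nP: "\<not> P (j - 1)"
        proof
          assume "P (j - 1)"
          then have "j \<le> j - 1" unfolding j_def by (rule Least_le)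
          with j0 show False by simp
        qed
        define s' where "s' = m ^ (j - 1) * s"
        have s'1: "smul s' w \<noteq> zero_word" using nP unfolding P_def s'_def .
        have s'2: "smul (m * s') w = zero_word" using Pj j0 unfolding P_def s'_def
          by (metis Suc_pred' bot_nat_0.not_eq_extremum mult.assoc power_Suc)
        have sub: "A s \<subseteq> A s'"
        proof
          fix t assume "t \<in> A s"
          then have "\<forall>g. t * s * fst w g = 0 \<and> t * s * snd w g = 0"
            unfolding A_def smul_zero_iff by (simp add: mult.assoc)
          then have "\<forall>g. m ^ (j - 1) * (t * s * fst w g) = 0 \<and> m ^ (j - 1) * (t * s * snd w g) = 0"
            by simp
          then show "t \<in> A s'" unfolding A_def smul_zero_iff s'_def
            by (simp add: algebra_simps)
        qed
        have "m \<in> A s'" "m \<notin> A s" using s'2 m(2) unfolding A_def by auto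
        then have "A s \<subset> A s'" using sub by blast
        then have "card (A s) < card (A s')" using fin by (meson psubset_card_mono rev_finite_subset subset_UNIV)
        moreover have "card (A s') \<le> card (UNIV :: 's set)" using fin by (simp add: card_mono)
        ultimately have "card (UNIV :: 's set) - card (A s') < N" using N by linarith
        then show ?thesis using less s'1 by blast
      qed
    qed
  qed
  have "smul 1 w \<noteq> zero_word" using w unfolding smul_def by simp
  then show ?thesis using main by blast
qed


lemma socle_r:
  assumes "chain_ring TYPE('s::comm_ring_1)" "maximal_ideal (M :: 's set)"
  shows "\<exists>r. r \<noteq> 0 \<and> (\<forall>y. (\<forall>m\<in>M. m * y = 0) \<longrightarrow> (\<exists>t. y = r * t)) \<and> (\<forall>x. r * x = 0 \<longleftrightarrow> x \<in> M)"
proof -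
  have "(\<lambda>_::unit. 1::'s, \<lambda>_::unit. 1::'s) \<noteq> zero_word"
    using assms(1) unfolding zero_word_def chain_ring_def by (auto simp: fun_eq_iff)
  from socle[OF assms this] obtain r where
    r1: "smul r (\<lambda>_::unit. 1::'s, \<lambda>_::unit. 1::'s) \<noteq> zero_word"
    and r2: "\<forall>m\<in>M. smul (m * r) (\<lambda>_::unit. 1::'s, \<lambda>_::unit. 1::'s) = zero_word" by blast
  have rnz: "r \<noteq> 0" using r1 by (auto simp: smul_zero_iff)
  have rM: "\<forall>m\<in>M. m * r = 0" using r2 by (auto simp: smul_zero_iff)
  have A: "\<exists>t. y = r * t" if y: "\<forall>m\<in>M. m * y = 0" for y
  proof -
    have "{r * t | t. True} \<subseteq> {y * t | t. True} \<or> {y * t | t. True} \<subseteq> {r * t | t. True}"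
    proof -
      have ch: "\<forall>I J :: 's set. r_ideal I \<and> r_ideal J \<longrightarrow> I \<subseteq> J \<or> J \<subseteq> I"
        using assms(1) unfolding chain_ring_def by blast
      show ?thesis using ch principal_ideal[of r] principal_ideal[of y] by blast
    qed
    then show ?thesis
    proof
      assume "{r * t | t. True} \<subseteq> {y * t | t. True}"
      then obtain t where t: "r * 1 = y * t" by blast
      show ?thesis
      proof (cases "t \<in> M")
        case True
        then have "t * y = 0" using y by blast
        have "r = y * t" using t by simp
        also have "\<dots> = t * y" by (rule mult.commute)
        finally show ?thesis using \<open>t * y = 0\<close> rnz by simp
      next
        case False
        then obtain t' where "t * t' = 1" using unit_notin[OF assms] by blast
        then have "y = y * (t * t')" by simp
        also have "\<dots> = (y * t) * t'" by (simp add: mult.assoc)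
        also have "\<dots> = r * t'" using t by simp
        finally have "y = r * t'" .
        then show ?thesis by blast
      qed
    next
      assume "{y * t | t. True} \<subseteq> {r * t | t. True}"
      then have "y * 1 \<in> {r * t | t. True}" by blast
      then show ?thesis by auto
    qed
  qed
  have B: "r * x = 0 \<longleftrightarrow> x \<in> M" for x
  proof
    assume rx: "r * x = 0"
    show "x \<in> M"
    proof (rule ccontr)
      assume "x \<notin> M"
      then obtain y where "x * y = 1" using unit_notin[OF assms] by blast
      then have "r = r * x * y" by (simp add: mult.assoc)
      then show False using rx rnz by simp
    qed
  next
    assume "x \<in> M" then show "r * x = 0" using rM mult.commute by metis
  qed
  show ?thesis using rnz A B by blast
qed

lemma red_zero: "ring_hom_on red \<Longrightarrow> red 0 = 0"
  unfolding ring_hom_on_def by (metis add_cancel_left_right add_0)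

lemma red_sum: "ring_hom_on red \<Longrightarrow> red (sum f A) = sum (\<lambda>x. red (f x)) A"
  using sum_comp_morphism[of red f A] red_zero unfolding ring_hom_on_def comp_def by metis

lemma red_gmult: "ring_hom_on red \<Longrightarrow> red (gmult u v g) = gmult (red \<circ> u) (red \<circ> v) g"
  unfolding gmult_def by (simp add: red_sum) (simp add: ring_hom_on_def)

lemma red_gone: "ring_hom_on red \<Longrightarrow> red \<circ> gone = gone"
  unfolding gone_def by (auto simp: fun_eq_iff red_zero ring_hom_on_def)

lemma hweight_cong:
  assumes "\<And>g. fst w g \<noteq> 0 \<longleftrightarrow> fst v g \<noteq> 0" "\<And>g. snd w g \<noteq> 0 \<longleftrightarrow> snd v g \<noteq> 0"
  shows "hweight w = hweight v"
  unfolding hweight_def using assms by simp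

lemma hweight_zero: "hweight (w :: ('g::finite \<Rightarrow> 'r::zero) \<times> ('g \<Rightarrow> 'r)) = 0 \<longleftrightarrow> w = zero_word"
  unfolding hweight_def zero_word_def by (cases w) (auto simp: fun_eq_iff)

lemma hweight_le: "hweight (w :: ('g::finite \<Rightarrow> 'r::zero) \<times> ('g \<Rightarrow> 'r)) \<le> 2 * card (UNIV :: 'g set)"
proof -
  have "card {g. fst w g \<noteq> 0} \<le> card (UNIV :: 'g set)" "card {g. snd w g \<noteq> 0} \<le> card (UNIV :: 'g set)"
    by (auto intro!: card_mono)
  then show ?thesis unfolding hweight_def by simp
qed

lemma hweight_smul: "hweight (smul s w) \<le> hweight w"
  unfolding hweight_def smul_def by (auto intro!: add_mono card_mono)

lemma Xfin: "finite {hweight w | w. w \<in> (C :: (('g::finite \<Rightarrow> 'r::zero) \<times> ('g \<Rightarrow> 'r)) set) \<and> w \<noteq> zero_word}"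
  by (rule finite_subset[of _ "{..2 * card (UNIV :: 'g set)}"]) (auto simp: hweight_le)


theorem theorem4p3:
  fixes red :: "'s::comm_ring_1 \<Rightarrow> 'f::field"
    and M :: "'s set"
    and q :: nat
    and \<beta> :: "'g::{finite,ab_group_add} \<Rightarrow> 'f"
    and k dmin :: nat
  assumes "chain_ring TYPE('s)"
    and "maximal_ideal M"
    and "ring_hom_on red" and "surj red" and "{x. red x = 0} = M"
    and "finite (UNIV :: 'f set)"
    and "prime_pow q" and "card (UNIV :: 'f set) = q ^ 2"
    and "odd (card (UNIV :: 'g set))" and "coprime (card (UNIV :: 'g set)) q"
    and "free_rank (qa_code gone \<beta>) k"
    and "min_dist (qa_code gone \<beta>) = dmin"
  shows "\<exists>d :: 'g \<Rightarrow> 's. red \<circ> d = \<beta> \<and>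
           red_word red ` qa_code gone d = qa_code gone \<beta> \<and>
           free_rank (qa_code gone d) k \<and>
           min_dist (qa_code gone d) = dmin"
proof -
  note ch = assms(1) and mx = assms(2) and hom = assms(3) and sj = assms(4) and ker = assms(5)
  note finf = assms(6)
  obtain r where rnz: "r \<noteq> 0" and rsoc: "\<And>y. (\<forall>m\<in>M. m * y = 0) \<Longrightarrow> (\<exists>t. y = r * t)"
    and rker: "\<And>x. r * x = 0 \<longleftrightarrow> x \<in> M"
    using socle_r[OF ch mx] by blast
  have rz: "r * x \<noteq> 0 \<longleftrightarrow> red x \<noteq> 0" for x using rker[of x] ker by blast
  define lift where "lift = (\<lambda>(t :: 'g \<Rightarrow> 'f) g. inv red (t g))"
  have rl: "red \<circ> lift t = t" for t
    unfolding lift_def comp_def using sj by (simp add: surj_f_inv_f)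
  define d where "d = lift \<beta>"
  have rd: "red \<circ> d = \<beta>" unfolding d_def by (rule rl)
  have redg: "red (gmult u d g) = gmult (red \<circ> u) \<beta> g" for u g
    using red_gmult[OF hom, of u d g] rd by simp
  have redg': "red \<circ> gmult u d = gmult (red \<circ> u) \<beta>" for u
    using redg by (auto simp: fun_eq_iff)
  have img: "red_word red ` qa_code gone d = qa_code gone \<beta>"
  proof
    show "red_word red ` qa_code gone d \<subseteq> qa_code gone \<beta>"
      unfolding qa_code_alt red_word_def using redg' by auto
    show "qa_code gone \<beta> \<subseteq> red_word red ` qa_code gone d"
    proof
      fix w assume "w \<in> qa_code gone \<beta>"
      then obtain t where w: "w = (t, gmult t \<beta>)" unfolding qa_code_alt by auto
      have "w = red_word red (lift t, gmult (lift t) d)"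
        unfolding w red_word_def using redg' rl by simp
      then show "w \<in> red_word red ` qa_code gone d" unfolding qa_code_alt by auto
    qed
  qed
  have "card (UNIV :: 'f set) ^ k = card (UNIV :: 'f set) ^ card (UNIV :: 'g set)"
    using card_free[OF finf assms(11)] card_qa[OF finf, of \<beta>] by simp
  moreover have "card {0::'f, 1} \<le> card (UNIV :: 'f set)" using finf by (intro card_mono) auto
  then have "1 < card (UNIV :: 'f set)" by simp
  ultimately have kn: "k = card (UNIV :: 'g set)" by simp
  have fr: "free_rank (qa_code gone d) k" unfolding kn by (rule free_qa)
  define Xb where "Xb = {hweight w | w. w \<in> qa_code gone \<beta> \<and> w \<noteq> zero_word}"
  define Xd where "Xd = {hweight w | w. w \<in> qa_code gone d \<and> w \<noteq> zero_word}"
  have "(gone, gmult gone \<beta>) \<in> qa_code gone \<beta>" unfolding qa_code_alt by auto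
  moreover have "(gone :: 'g \<Rightarrow> 'f, gmult gone \<beta>) \<noteq> zero_word"
    unfolding zero_word_def gone_def by (auto simp: fun_eq_iff)
  ultimately have Xbne: "Xb \<noteq> {}" unfolding Xb_def by blast
  have dminXb: "dmin \<in> Xb" using assms(12) Min_in[OF Xfin Xbne[unfolded Xb_def]]
    unfolding min_dist_def Xb_def by simp
  have dminle: "dmin \<le> x" if "x \<in> Xb" for x
    using assms(12) Min_le[OF Xfin that[unfolded Xb_def]] unfolding min_dist_def by simp
  have up: "dmin \<in> Xd"
  proof -
    obtain w where w: "w \<in> qa_code gone \<beta>" "w \<noteq> zero_word" "dmin = hweight w"
      using dminXb unfolding Xb_def by blast
    then obtain t where wt: "w = (t, gmult t \<beta>)" unfolding qa_code_alt by auto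
    define v where "v = smul r (lift t, gmult (lift t) d)"
    have v: "v = ((\<lambda>g. r * lift t g), gmult (\<lambda>g. r * lift t g) d)"
      unfolding v_def smul_def by (simp add: gmult_smul fun_eq_iff)
    have vC: "v \<in> qa_code gone d" unfolding v qa_code_alt by auto
    have hv: "hweight v = hweight w"
    proof (rule hweight_cong)
      fix g
      show "fst v g \<noteq> 0 \<longleftrightarrow> fst w g \<noteq> 0"
        unfolding v_def smul_def wt using rz rl by (simp add: comp_def fun_eq_iff)
      show "snd v g \<noteq> 0 \<longleftrightarrow> snd w g \<noteq> 0"
        unfolding v_def smul_def wt using rz[of "gmult (lift t) d g"] redg[of "lift t" g] rl by simp
    qed
    have "v \<noteq> zero_word" using hv w(2) hweight_zero by metis
    then show ?thesis unfolding Xd_def using vC hv w(3) by (metis (mono_tags, lifting) mem_Collect_eq)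
  qed
  have low: "dmin \<le> x" if xX: "x \<in> Xd" for x
  proof -
    obtain w where w: "w \<in> qa_code gone d" "w \<noteq> zero_word" "x = hweight w"
      using xX unfolding Xd_def by blast
    then obtain u where wu: "w = (u, gmult u d)" unfolding qa_code_alt by auto
    obtain s where s1: "smul s w \<noteq> zero_word" and s2: "\<forall>m\<in>M. smul (m * s) w = zero_word"
      using socle[OF ch mx w(2)] by blast
    have "\<forall>m\<in>M. m * (s * u g) = 0" for g
      using s2 unfolding smul_zero_iff wu by (simp add: mult.assoc)
    then have "\<exists>t. s * u g = r * t" for g using rsoc by blast
    then obtain x where xg: "\<And>g. s * u g = r * x g" by metis
    have sw: "smul s w = ((\<lambda>g. r * x g), (\<lambda>g. r * gmult x d g))"
      unfolding smul_def wu using gmult_smul[of s u d] gmult_smul[of r x d] xg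
      by (simp add: fun_eq_iff)
    define v where "v = (red \<circ> x, gmult (red \<circ> x) \<beta>)"
    have vC: "v \<in> qa_code gone \<beta>" unfolding v_def qa_code_alt by auto
    have hv: "hweight (smul s w) = hweight v"
    proof (rule hweight_cong)
      fix g
      show "fst (smul s w) g \<noteq> 0 \<longleftrightarrow> fst v g \<noteq> 0" unfolding sw v_def using rz by simp
      show "snd (smul s w) g \<noteq> 0 \<longleftrightarrow> snd v g \<noteq> 0" unfolding sw v_def using rz redg by simp
    qed
    have "v \<noteq> zero_word" using hv s1 hweight_zero by metis
    then have "hweight v \<in> Xb" unfolding Xb_def using vC by blast
    then have "dmin \<le> hweight v" by (rule dminle)
    also have "\<dots> \<le> hweight w" using hv hweight_smul[of s w] by simp
    finally show ?thesis using w(3) by simp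
  qed
  have "min_dist (qa_code gone d) = dmin"
    unfolding min_dist_def Xd_def[symmetric]
    by (rule Min_eqI) (use Xfin[of "qa_code gone d"] up low in \<open>auto simp: Xd_def\<close>)
  then show ?thesis using rd img fr by blast
qed

end
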